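(* Let $n\geq1$, $1\leq l\leq n$, $m\leq n-l+1$ and $\eta\in\Omega$. Let $(a_{\bar w})_{\bar w\in\overline{T_\eta}}$ be complex numbers with $\sum_{\bar w\in\overline{T_\eta}}a_{\bar w}\bar w=0$ in $\mathbb C^{\lambda_{2,n}}$. Suppose $E=\{(c_1,l),\ldots,(c_m,l)\}\subset T_\eta$ for some $0<c_1<\cdots<c_m$, and that $a_{\bar u}=0$ for every $u\in T_\eta\setminus E$ with $\pi_2(u)\geq l$. Then $a_{\bar v}=0$ for all $v\in E$. The same holds with $E=\{(l,c_1),\ldots,(l,c_m)\}$ and the condition $\pi_2(u)\geq l$ replaced by $\pi_1(u)\geq l$.
   Context: $\pi_i$ is the $i$-th coordinate. $\Lambda_{2,n}=\{\alpha\in\mathbb N^2:1\leq\alpha_1+\alpha_2\leq n\}$, $\lambda_{2,n}=|\Lambda_{2,n}|$; $\bar v=\big(\binom{v_1}{\alpha_1}\binom{v_2}{\alpha_2}\big)_{\alpha\in\Lambda_{2,n}}$. $\Omega$ is the set of $\eta=(z,d_0,\ldots,d_r)$ with $z\in\{0,1\}$, $d_0=0$, $d_i\geq1$, $\sum d_i=n$. For $1\leq j\leq n$, $t$ unique with $\sum_{i<t}d_i<j\leq\sum_{i\leq t}d_i$, $c=j-\sum_{i<t}d_i$; $v_{j,\eta}=(\sum_{i\text{ odd},i<t}d_i+c,0)$ if $z=1,t$ odd; $(0,\sum_{i\text{ even},i<t}d_i+c)$ if $z=1,t$ even; $(0,\sum_{i\text{ odd},i<t}d_i+c)$ if $z=0,t$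 odd; $(\sum_{i\text{ even},i<t}d_i+c,0)$ if $z=0,t$ even. $T_{j,\eta}=\{v_{j,\eta}+p(1,1):0\leq p\leq n-j\}$, $T_{0,\eta}=\{(p,p):1\leq p\leq n\}$, $T_\eta=\bigcup_{j=0}^nT_{j,\eta}$, $\overline{T_\eta}=\{\bar w:w\in T_\eta\}$ (distinct elements of $T_\eta$ give distinct vectors). *)

theory Defs
  imports Complex_Main
begin

text \<open>Points of N^2 are pairs (nat * nat); pi_1 = fst, pi_2 = snd.\<close>

definition Lambda2 :: "nat \<Rightarrow> (nat \<times> nat) set" where
  "Lambda2 n = {\<alpha>. 1 \<le> fst \<alpha> + snd \<alpha> \<and> fst \<alpha> + snd \<alpha> \<le> n}"

text \<open>The vector bar v in C^(lambda_{2,n}), represented as a function on Lambda2 n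
  (extended by 0 outside Lambda2 n).\<close>
definition barv :: "nat \<Rightarrow> nat \<times> nat \<Rightarrow> (nat \<times> nat \<Rightarrow> complex)" where
  "barv n v = (\<lambda>\<alpha>. if \<alpha> \<in> Lambda2 n
      then of_nat ((fst v choose fst \<alpha>) * (snd v choose snd \<alpha>)) else 0)"

text \<open>eta = (z, d_0, ..., d_r) is represented as a pair (z, d) with d = [d_0, ..., d_r].\<close>
definition Omega :: "nat \<Rightarrow> (nat \<times> nat list) set" where
  "Omega n = {(z, d). z \<in> {0, 1} \<and> d \<noteq> [] \<and> d ! 0 = 0 \<and>
      (\<forall>i \<in> {1..<length d}. 1 \<le> d ! i) \<and> sum_list d = n}"

definition psum :: "nat list \<Rightarrow> nat \<Rightarrow> nat" where
  "psum d t = (\<Sum>i<t. d ! i)"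

definition tidx :: "nat list \<Rightarrow> nat \<Rightarrow> nat" where
  "tidx d j = (THE t. t < length d \<and> psum d t < j \<and> j \<le> psum d (Suc t))"

definition vpt :: "nat \<times> nat list \<Rightarrow> nat \<Rightarrow> nat \<times> nat" where
  "vpt \<eta> j = (let z = fst \<eta>; d = snd \<eta>; t = tidx d j; c = j - psum d t;
      so = (\<Sum>i<t. if odd i then d ! i else 0);
      se = (\<Sum>i<t. if even i then d ! i else 0)
    in if z = 1 then (if odd t then (so + c, 0) else (0, se + c))
       else (if odd t then (0, so + c) else (se + c, 0)))"

definition Tj :: "nat \<Rightarrow> nat \<times> nat list \<Rightarrow> nat \<Rightarrow> (nat \<times> nat) set" where
  "Tj n \<eta> j = (if j = 0 then {(p, p) | p. 1 \<le> p \<and> p \<le> n}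
     else {(fst (vpt \<eta> j) + p, snd (vpt \<eta> j) + p) | p. p \<le> n - j})"

definition Teta :: "nat \<Rightarrow> nat \<times> nat list \<Rightarrow> (nat \<times> nat) set" where
  "Teta n \<eta> = (\<Union>j\<in>{0..n}. Tj n \<eta> j)"

end

theory Submission imports Defs "HOL-Computational_Algebra.Polynomial" begin


definition Bp :: "nat \<Rightarrow> complex poly" where
  "Bp k = smult (inverse (fact k)) (\<Prod>i<k. [:- of_nat i, 1:])"

lemma poly_Bp: "poly (Bp k) (of_nat x) = of_nat (x choose k)"
  by (simp add: Bp_def poly_prod binomial_gbinomial gbinomial_prod_rev atLeast0LessThan field_simps)

lemma degree_Bp: "degree (Bp k) = k"
proof -
  have "degree (\<Prod>i<k. [:- of_nat i, 1::complex:]) = (\<Sum>i<k. degree [:- of_nat i, 1::complex:])"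
    by (rule degree_prod_eq_sum_degree) auto
  then show ?thesis by (simp add: Bp_def)
qed

lemma lead_Bp: "coeff (Bp k) k = inverse (fact k)"
proof -
  have "lead_coeff (\<Prod>i<k. [:- of_nat i, 1::complex:]) = 1"
    by (simp add: lead_coeff_prod)
  moreover have "degree (\<Prod>i<k. [:- of_nat i, 1::complex:]) = k"
    using degree_Bp[of k] by (simp add: Bp_def)
  ultimately show ?thesis by (simp add: Bp_def)
qed

lemma poly_vanish:
  fixes A :: "'b \<Rightarrow> complex" and f :: "'b \<Rightarrow> nat"
  assumes h: "\<forall>k<N. (\<Sum>u\<in>E. A u * of_nat (f u choose k)) = 0"
  shows "degree p < N \<Longrightarrow> (\<Sum>u\<in>E. A u * poly p (of_nat (f u))) = 0"
proof (induction "degree p" arbitrary: p rule: less_induct)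
  case less
  define d where "d = degree p"
  define q where "q = p - smult (lead_coeff p * fact d) (Bp d)"
  have dq: "degree q \<le> d" unfolding q_def d_def
    by (metis degree_Bp degree_diff_le degree_smult_le le_refl order_trans)
  have cq: "coeff q d = 0" unfolding q_def by (simp add: lead_Bp d_def)
  have "degree q < d \<or> q = 0"
    using dq cq by (metis le_neq_implies_less leading_coeff_0_iff)
  then have sq: "(\<Sum>u\<in>E. A u * poly q (of_nat (f u))) = 0"
    using less d_def by auto
  have pq: "p = q + smult (lead_coeff p * fact d) (Bp d)" unfolding q_def by simp
  have "(\<Sum>u\<in>E. A u * poly p (of_nat (f u))) =
     (\<Sum>u\<in>E. A u * poly q (of_nat (f u))) + (lead_coeff p * fact d) * (\<Sum>u\<in>E. A u * of_nat (f u choose d))"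
    by (subst pq) (simp add: poly_Bp algebra_simps sum.distrib sum_distrib_left)
  also have "\<dots> = 0" using sq h less(2) d_def by simp
  finally show ?case .
qed

lemma key:
  fixes A :: "'b \<Rightarrow> complex" and f :: "'b \<Rightarrow> nat"
  assumes fin: "finite E" and inj: "inj_on f E"
    and h: "\<forall>k<card E. (\<Sum>u\<in>E. A u * of_nat (f u choose k)) = 0"
    and u: "u \<in> E"
  shows "A u = 0"
proof -
  define p where "p = (\<Prod>v\<in>E-{u}. [:- of_nat (f v), 1::complex:])"
  have "degree p = (\<Sum>v\<in>E-{u}. degree [:- of_nat (f v), 1::complex:])"
    unfolding p_def by (rule degree_prod_eq_sum_degree) auto
  then have "degree p = card E - 1" using fin u by simp
  moreover have "card E > 0" using fin u card_gt_0_iff by blast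
  ultimately have "degree p < card E" by simp
  then have s: "(\<Sum>v\<in>E. A v * poly p (of_nat (f v))) = 0"
    using poly_vanish[OF h] by blast
  have z: "poly p (of_nat (f v)) = 0" if "v \<in> E" "v \<noteq> u" for v
    unfolding p_def poly_prod using that fin
    by (intro prod_zero) auto
  have nz: "poly p (of_nat (f u)) \<noteq> 0"
    unfolding p_def poly_prod using fin inj u
    by (auto simp: prod_zero_iff inj_on_def)
  have "(\<Sum>v\<in>E. A v * poly p (of_nat (f v))) = A u * poly p (of_nat (f u))"
    using fin u z by (subst sum.remove[of E u]) auto
  then show ?thesis using s nz by simp
qed
lemma core:
  fixes A :: "nat \<times> nat \<Rightarrow> complex" and f g :: "nat \<times> nat \<Rightarrow> nat"
  assumes fin: "finite T" and ET: "E \<subseteq> T" and gE: "\<forall>u\<in>E. g u = l"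
    and inj: "inj_on f E" and cE: "card E + l \<le> n + 1"
    and out: "\<forall>u\<in>T-E. l \<le> g u \<longrightarrow> A u = 0"
    and h: "\<forall>k. k + l \<le> n \<longrightarrow> (\<Sum>u\<in>T. A u * of_nat ((f u choose k) * (g u choose l))) = 0"
  shows "\<forall>u\<in>E. A u = 0"
proof
  fix u assume u: "u \<in> E"
  have finE: "finite E" using fin ET finite_subset by blast
  have "\<forall>k<card E. (\<Sum>u\<in>E. A u * of_nat (f u choose k)) = 0"
  proof (intro allI impI)
    fix k assume k: "k < card E"
    have z: "(\<Sum>u\<in>T-E. A u * of_nat ((f u choose k) * (g u choose l))) = 0"
    proof (rule sum.neutral, rule ballI)
      fix v assume v: "v \<in> T - E"
      show "A v * of_nat ((f v choose k) * (g v choose l)) = 0"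
      proof (cases "l \<le> g v")
        case True then show ?thesis using out v by simp
      next
        case False then show ?thesis by simp
      qed
    qed
    have "(\<Sum>u\<in>T. A u * of_nat ((f u choose k) * (g u choose l))) =
      (\<Sum>u\<in>E. A u * of_nat ((f u choose k) * (g u choose l))) +
      (\<Sum>u\<in>T-E. A u * of_nat ((f u choose k) * (g u choose l)))"
      using fin ET by (simp add: sum.subset_diff)
    moreover have "k + l \<le> n" using k cE by linarith
    ultimately have "(\<Sum>u\<in>E. A u * of_nat ((f u choose k) * (g u choose l))) = 0"
      using h z by simp
    moreover have "(\<Sum>u\<in>E. A u * of_nat ((f u choose k) * (g u choose l))) =
        (\<Sum>u\<in>E. A u * of_nat (f u choose k))"
      using gE by (intro sum.cong) auto
    ultimately show "(\<Sum>u\<in>E. A u * of_nat (f u choose k)) = 0" by simp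
  qed
  then show "A u = 0" using key[OF finE inj _ u] by blast
qed

lemma barv_inj: "1 \<le> n \<Longrightarrow> inj (barv n)"
proof (rule injI)
  fix u v assume n: "1 \<le> n" and e: "barv n u = barv n v"
  have "barv n u (1,0) = barv n v (1,0)" "barv n u (0,1) = barv n v (0,1)" using e by auto
  then show "u = v" using n by (auto simp: barv_def Lambda2_def prod_eq_iff)
qed

lemma Teta_finite: "finite (Teta n \<eta>)"
proof -
  have "finite (Tj n \<eta> j)" for j
  proof (cases "j = 0")
    case True
    have "Tj n \<eta> j = (\<lambda>p. (p,p)) ` {1..n}" using True by (auto simp: Tj_def)
    then show ?thesis by simp
  next
    case False
    have "Tj n \<eta> j = (\<lambda>p. (fst (vpt \<eta> j) + p, snd (vpt \<eta> j) + p)) ` {..n-j}"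
      using False by (auto simp: Tj_def)
    then show ?thesis by simp
  qed
  then show ?thesis by (simp add: Teta_def)
qed

theorem lemma2p7:
  fixes n l m :: nat and \<eta> :: "nat \<times> nat list"
    and a :: "(nat \<times> nat \<Rightarrow> complex) \<Rightarrow> complex"
    and c :: "nat \<Rightarrow> nat"
  assumes "1 \<le> n" and "1 \<le> l" and "l \<le> n" and "m \<le> n - l + 1"
    and "\<eta> \<in> Omega n"
    and lin: "\<forall>\<alpha> \<in> Lambda2 n.
          (\<Sum>w \<in> barv n ` Teta n \<eta>. a w * w \<alpha>) = 0"
    and "0 < c 1" and "strict_mono_on {1..m} c"
  shows "(let E = {(c i, l) | i. 1 \<le> i \<and> i \<le> m} in
           E \<subseteq> Teta n \<eta> \<and>
           (\<forall>u \<in> Teta n \<eta> - E. l \<le> snd u \<longrightarrow> a (barv n u) = 0)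
           \<longrightarrow> (\<forall>v \<in> E. a (barv n v) = 0))
       \<and> (let E = {(l, c i) | i. 1 \<le> i \<and> i \<le> m} in
           E \<subseteq> Teta n \<eta> \<and>
           (\<forall>u \<in> Teta n \<eta> - E. l \<le> fst u \<longrightarrow> a (barv n u) = 0)
           \<longrightarrow> (\<forall>v \<in> E. a (barv n v) = 0))"
proof -
  let ?T = "Teta n \<eta>"
  have fin: "finite ?T" by (rule Teta_finite)
  have inj: "inj_on (barv n) ?T" using barv_inj[OF assms(1)] by (rule inj_on_subset) simp
  have lin2: "(\<Sum>u\<in>?T. a (barv n u) * barv n u \<alpha>) = 0" if "\<alpha> \<in> Lambda2 n" for \<alpha>
    using lin that sum.reindex[OF inj, of "\<lambda>w. a w * w \<alpha>"] by simp
  have E1: "{(c i, l) | i. 1 \<le> i \<and> i \<le> m} = (\<lambda>i. (c i, l)) ` {1..m}" by auto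
  have E2: "{(l, c i) | i. 1 \<le> i \<and> i \<le> m} = (\<lambda>i. (l, c i)) ` {1..m}" by auto
  have c1: "card {(c i, l) | i. 1 \<le> i \<and> i \<le> m} + l \<le> n + 1"
    using card_image_le[of "{1..m}" "\<lambda>i. (c i, l)"] E1 assms(3,4) by simp
  have c2: "card {(l, c i) | i. 1 \<le> i \<and> i \<le> m} + l \<le> n + 1"
    using card_image_le[of "{1..m}" "\<lambda>i. (l, c i)"] E2 assms(3,4) by simp
  have h1: "\<forall>k. k + l \<le> n \<longrightarrow> (\<Sum>u\<in>?T. a (barv n u) * of_nat ((fst u choose k) * (snd u choose l))) = 0"
  proof (intro allI impI)
    fix k assume k: "k + l \<le> n"
    have "(k, l) \<in> Lambda2 n" using k assms(2) by (simp add: Lambda2_def)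
    then show "(\<Sum>u\<in>?T. a (barv n u) * of_nat ((fst u choose k) * (snd u choose l))) = 0"
      using lin2[of "(k,l)"] by (simp add: barv_def)
  qed
  have h2: "\<forall>k. k + l \<le> n \<longrightarrow> (\<Sum>u\<in>?T. a (barv n u) * of_nat ((snd u choose k) * (fst u choose l))) = 0"
  proof (intro allI impI)
    fix k assume k: "k + l \<le> n"
    have "(l, k) \<in> Lambda2 n" using k assms(2) by (simp add: Lambda2_def)
    then show "(\<Sum>u\<in>?T. a (barv n u) * of_nat ((snd u choose k) * (fst u choose l))) = 0"
      using lin2[of "(l,k)"] by (simp add: barv_def mult.commute)
  qed
  show ?thesis
  proof (rule conjI)
    show "let E = {(c i, l) | i. 1 \<le> i \<and> i \<le> m} in
           E \<subseteq> ?T \<and> (\<forall>u \<in> ?T - E. l \<le> snd u \<longrightarrow> a (barv n u) = 0)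
           \<longrightarrow> (\<forall>v \<in> E. a (barv n v) = 0)"
      unfolding Let_def
    proof (intro impI)
      assume H: "{(c i, l) | i. 1 \<le> i \<and> i \<le> m} \<subseteq> ?T \<and>
        (\<forall>u \<in> ?T - {(c i, l) | i. 1 \<le> i \<and> i \<le> m}. l \<le> snd u \<longrightarrow> a (barv n u) = 0)"
      have "inj_on fst {(c i, l) | i. 1 \<le> i \<and> i \<le> m}" by (auto simp: inj_on_def)
      then show "\<forall>v \<in> {(c i, l) | i. 1 \<le> i \<and> i \<le> m}. a (barv n v) = 0"
        using core[OF fin _ _ _ c1, of snd fst "\<lambda>u. a (barv n u)"] H h1 by auto
    qed
  next
    show "let E = {(l, c i) | i. 1 \<le> i \<and> i \<le> m} in
           E \<subseteq> ?T \<and> (\<forall>u \<in> ?T - E. l \<le> fst u \<longrightarrow> a (barv n u) = 0)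
           \<longrightarrow> (\<forall>v \<in> E. a (barv n v) = 0)"
      unfolding Let_def
    proof (intro impI)
      assume H: "{(l, c i) | i. 1 \<le> i \<and> i \<le> m} \<subseteq> ?T \<and>
        (\<forall>u \<in> ?T - {(l, c i) | i. 1 \<le> i \<and> i \<le> m}. l \<le> fst u \<longrightarrow> a (barv n u) = 0)"
      have "inj_on snd {(l, c i) | i. 1 \<le> i \<and> i \<le> m}" by (auto simp: inj_on_def)
      then show "\<forall>v \<in> {(l, c i) | i. 1 \<le> i \<and> i \<le> m}. a (barv n v) = 0"
        using core[OF fin _ _ _ c2, of fst snd "\<lambda>u. a (barv n u)"] H h2 by auto
    qed
  qed
qed

end
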